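(* Let $\ell\ge1$ be an integer and let $\tau^\ell$ be the $(2\ell+1)\times(2\ell+1)$ matrix defined in the context. Then: (a) $\tau^\ell$ is invertible (indeed unitary); (b) $|\tau^\ell_{0,0}|<1$; (c) Let $v\in\mathbb{C}^{2\ell+1}$ (coordinates indexed by $-\ell,\dots,\ell$) be supported either on $\{-\ell,\dots,-1\}$ or on $\{1,\dots,\ell\}$, and suppose $\tau^\ell v$ is supported either on $\{n\in\{-\ell,\dots,\ell\}: n+\ell \text{ even}\}$ or on $\{n\in\{-\ell,\dots,\ell\}: n+\ell\text{ odd}\}$. Then $v=0$ (and hence $\tau^\ell v=0$). (All four combinations of these support conditions are covered.)
   Context: For $\ell\in\{\tfrac12,1,\tfrac32,2,\dots\}$ and $m,n\in\{-\ell,-\ell+1,\dots,\ell\}$, define $$\tau^\ell_{m,n}=\sqrt{\frac{(\ell-m)!(\ell+m)!}{(\ell-n)!(\ell+n)!}}\;\frac{i^{2\ell}}{2^\ell}\int_{|z|=1}(z+1)^{\ell-n}(z-1)^{\ell+n}z^{m-\ell}\,\frac{dz}{2\pi i z},$$ i.e. the prefactor times the coefficient of $z^{\ell-m}$ in the polynomial $(z+1)^{\ell-n}(z-1)^{\ell+n}$. The matrix $\tau^\ell=(\tau^\ell_{m,n})$, rows indexed by $m$ and columns by $n$ in increasing order from $-\ell$ to $\ell$, is the matrix of the spin-$\ell$ irreducible representation of $SU(2)$ evaluated at $\frac{1}{\sqrt2}\begin{pmatrix} i & i\\ i & -i\end{pmatrix}$, and is unitary. *)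

theory Defs
  imports Complex_Main "HOL-Computational_Algebra.Polynomial"
begin

text \<open>The contour integral in the paper is
  the coefficient of z^(l-m) in (z+1)^(l-n) (z-1)^(l+n).\<close>

definition tau :: "int \<Rightarrow> int \<Rightarrow> int \<Rightarrow> complex" where
  "tau l m n =
     complex_of_real (sqrt ((fact (nat (l - m)) * fact (nat (l + m)))
                          / (fact (nat (l - n)) * fact (nat (l + n)))))
     * (\<i> ^ nat (2 * l) / 2 ^ nat l)
     * coeff ([:1, 1:] ^ nat (l - n) * [:-1, 1:] ^ nat (l + n)) (nat (l - m))"

definition tau_apply :: "int \<Rightarrow> (int \<Rightarrow> complex) \<Rightarrow> int \<Rightarrow> complex" where
  "tau_apply l v m = (\<Sum>n\<in>{-l..l}. tau l m n * v n)"

end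

theory Submission imports Defs "HOL-Computational_Algebra.Polynomial_Factorial" "HOL-Computational_Algebra.Field_as_Ring" begin

definition PP :: "nat \<Rightarrow> nat \<Rightarrow> complex poly" where
  "PP N k = [:1,1:]^k * [:-1,1:]^(N-k)"

definition TT :: "nat \<Rightarrow> complex poly \<Rightarrow> complex poly" where
  "TT N q = (\<Sum>k\<le>N. smult (coeff q k) (PP N k))"

lemma degree_PP: assumes "k \<le> N" shows "degree (PP N k) \<le> N"
proof -
  have "degree (PP N k) \<le> degree ([:1,1:]^k :: complex poly) + degree ([:-1,1:]^(N-k) :: complex poly)"
    unfolding PP_def by (rule degree_mult_le)
  also have "\<dots> \<le> k + (N - k)"
    by (metis add_le_mono degree_linear_power order_refl)
  finally show ?thesis using assms by linarith
qed

lemma degree_TT: "degree (TT N q) \<le> N"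
  unfolding TT_def
proof (rule degree_sum_le)
  fix k assume "k \<in> {..N}"
  then show "degree (smult (coeff q k) (PP N k)) \<le> N"
    using degree_PP[of k N] degree_smult_le[of "coeff q k" "PP N k"] by simp
qed simp

lemma poly_sum_upto:
  fixes q :: "complex poly"
  assumes "degree q \<le> N"
  shows "poly q x = (\<Sum>k\<le>N. coeff q k * x ^ k)"
proof -
  have "(\<Sum>k\<le>N. coeff q k * x ^ k) = (\<Sum>k\<le>degree q. coeff q k * x ^ k)"
    by (rule sum.mono_neutral_right) (use assms in \<open>auto simp: coeff_eq_0\<close>)
  then show ?thesis using poly_altdef[of q x] by simp
qed

lemma poly_TT:
  assumes "degree q \<le> N" "z \<noteq> 1"
  shows "poly (TT N q) z = (z-1)^N * poly q ((z+1)/(z-1))"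
proof -
  have z1: "z - 1 \<noteq> 0" using assms by simp
  have "poly (TT N q) z = (\<Sum>k\<le>N. coeff q k * ((z+1)^k * (z-1)^(N-k)))"
    by (simp add: TT_def PP_def poly_sum add_ac)
  also have "\<dots> = (\<Sum>k\<le>N. (z-1)^N * (coeff q k * ((z+1)/(z-1))^k))"
  proof (rule sum.cong[OF refl])
    fix k assume "k \<in> {..N}"
    then have "(z-1)^N = (z-1)^k * (z-1)^(N-k)" by (simp add: power_add[symmetric])
    then show "coeff q k * ((z+1)^k * (z-1)^(N-k)) = (z-1)^N * (coeff q k * ((z+1)/(z-1))^k)"
      using z1 by (simp add: power_divide field_simps)
  qed
  also have "\<dots> = (z-1)^N * poly q ((z+1)/(z-1))"
    by (simp add: poly_sum_upto[OF assms(1)] sum_distrib_left)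
  finally show ?thesis .
qed

lemma TT_TT:
  assumes "degree q \<le> N"
  shows "TT N (TT N q) = smult (2^N) q"
proof -
  have eq: "poly (TT N (TT N q)) z = poly (smult (2^N) q) z" if "z \<noteq> 1" for z
  proof -
    have z1: "z - 1 \<noteq> 0" using that by simp
    define w where "w = (z+1)/(z-1)"
    have w1: "w \<noteq> 1" using z1 by (simp add: w_def field_simps)
    have wm: "w - 1 = 2/(z-1)" using z1 by (simp add: w_def field_simps)
    have wp: "(w+1)/(w-1) = z" using z1 by (simp add: w_def field_simps)
    have "poly (TT N (TT N q)) z = (z-1)^N * ((w-1)^N * poly q ((w+1)/(w-1)))"
      using poly_TT[OF degree_TT that] poly_TT[OF assms w1] by (simp add: w_def)
    also have "\<dots> = ((z-1)*(w-1))^N * poly q z"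
      by (simp add: wp power_mult_distrib)
    also have "(z-1)*(w-1) = 2" using z1 by (simp add: wm field_simps)
    also have "2^N * poly q z = poly (smult (2^N) q) z" by simp
    finally show ?thesis .
  qed
  let ?d = "TT N (TT N q) - smult (2^N) q"
  show ?thesis
  proof (rule ccontr)
    assume "\<not> ?thesis"
    then have "?d \<noteq> 0" by simp
    then have "finite {x. poly ?d x = 0}" by (rule poly_roots_finite)
    moreover have "UNIV - {1} \<subseteq> {x. poly ?d x = 0}" using eq by auto
    ultimately have "finite (UNIV - {1::complex})" by (rule finite_subset[rotated])
    then show False by (simp add: infinite_UNIV_char_0)
  qed
qed

definition MM :: "nat \<Rightarrow> nat \<Rightarrow> nat \<Rightarrow> complex" where
  "MM N i j = coeff (PP N j) i"

lemma TT_monom: assumes "j \<le> N" shows "TT N (monom 1 j) = PP N j"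
proof -
  have "TT N (monom 1 j) = (\<Sum>k\<le>N. if k = j then PP N k else 0)"
    unfolding TT_def by (rule sum.cong) (auto simp: coeff_monom)
  also have "\<dots> = PP N j" using assms by (simp add: sum.delta)
  finally show ?thesis .
qed

lemma MM_sq:
  assumes "i \<le> N" "j \<le> N"
  shows "(\<Sum>k\<le>N. MM N i k * MM N k j) = (if i = j then 2^N else 0)"
proof -
  have dm: "degree (monom (1::complex) j) \<le> N" using assms by (simp add: degree_monom_eq)
  have "TT N (PP N j) = smult (2^N) (monom 1 j)"
    using TT_TT[OF dm] TT_monom[OF assms(2)] by simp
  then have "coeff (TT N (PP N j)) i = (if i = j then 2^N else 0)"
    by (simp add: coeff_monom)
  moreover have "coeff (TT N (PP N j)) i = (\<Sum>k\<le>N. MM N i k * MM N k j)"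
    by (simp add: TT_def coeff_sum MM_def mult_ac)
  ultimately show ?thesis by simp
qed

lemma sum_reindex_int:
  fixes l :: int assumes "l \<ge> 0"
  shows "(\<Sum>k\<in>{-l..l}. g k) = (\<Sum>j\<le>nat (2*l). g (l - int j))"
proof -
  have "{-l..l} = (\<lambda>j. l - int j) ` {..nat (2*l)}"
  proof
    show "{-l..l} \<subseteq> (\<lambda>j. l - int j) ` {..nat (2*l)}"
    proof
      fix k assume k: "k \<in> {-l..l}"
      then have "k = l - int (nat (l - k))" "nat (l - k) \<in> {..nat (2*l)}" by auto
      then show "k \<in> (\<lambda>j. l - int j) ` {..nat (2*l)}" by blast
    qed
  qed (use assms in auto)
  moreover have "inj_on (\<lambda>j. l - int j) {..nat (2*l)}" by (auto simp: inj_on_def)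
  ultimately show ?thesis by (simp add: sum.reindex)
qed

lemma MM_sq_int:
  fixes l :: int assumes "l \<ge> 0" "m \<in> {-l..l}" "n \<in> {-l..l}"
  shows "(\<Sum>k\<in>{-l..l}. MM (nat (2*l)) (nat (l-m)) (nat (l-k)) * MM (nat (2*l)) (nat (l-k)) (nat (l-n)))
     = (if m = n then 2^nat (2*l) else 0)"
proof -
  have "(\<Sum>k\<in>{-l..l}. MM (nat (2*l)) (nat (l-m)) (nat (l-k)) * MM (nat (2*l)) (nat (l-k)) (nat (l-n)))
      = (\<Sum>j\<le>nat (2*l). MM (nat (2*l)) (nat (l-m)) j * MM (nat (2*l)) j (nat (l-n)))"
    by (simp add: sum_reindex_int[OF assms(1)])
  also have "\<dots> = (if nat (l-m) = nat (l-n) then 2^nat (2*l) else 0)"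
    by (rule MM_sq) (use assms in auto)
  also have "(nat (l-m) = nat (l-n)) = (m = n)" using assms by auto
  finally show ?thesis .
qed

definition sc :: "int \<Rightarrow> int \<Rightarrow> real" where
  "sc l m = sqrt (fact (nat (l - m)) * fact (nat (l + m)))"

definition CC :: "int \<Rightarrow> complex" where
  "CC l = \<i> ^ nat (2 * l) / 2 ^ nat l"

lemma sc_pos: "sc l m > 0"
  unfolding sc_def by (simp add: fact_gt_zero)

lemma tau_eq:
  fixes l :: int assumes "l \<ge> 0" "m \<in> {-l..l}" "n \<in> {-l..l}"
  shows "tau l m n = complex_of_real (sc l m / sc l n) * CC l * MM (nat (2*l)) (nat (l-m)) (nat (l-n))"
proof -
  have "nat (l + n) = nat (2*l) - nat (l - n)" using assms by auto
  then show ?thesis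
    unfolding tau_def sc_def CC_def MM_def PP_def by (simp add: real_sqrt_divide)
qed

lemma CC_sq: "l \<ge> 0 \<Longrightarrow> CC l * CC l * 2 ^ nat (2*l) = 1"
proof -
  assume l: "l \<ge> 0"
  have n: "nat (2*l) = 2 * nat l" using l by auto
  have "\<i> ^ nat (2*l) * \<i> ^ nat (2*l) = (1::complex)"
  proof -
    have "\<i> ^ nat (2*l) * \<i> ^ nat (2*l) = (\<i>^4) ^ nat l" unfolding n
      by (metis mult_2 power_add power_mult mult.commute numeral_Bit0)
    then show ?thesis by simp
  qed
  moreover have "(2::complex) ^ nat (2*l) = 2^nat l * 2^nat l"
    unfolding n by (simp add: power_mult power_mult_distrib[symmetric])
  ultimately show ?thesis unfolding CC_def by (simp add: field_simps)
qed

lemma tau_sq: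
  fixes l :: int assumes l: "l \<ge> 0" and mn: "m \<in> {-l..l}" "n \<in> {-l..l}"
  shows "(\<Sum>k\<in>{-l..l}. tau l m k * tau l k n) = (if m = n then 1 else 0)"
proof -
  let ?M = "MM (nat (2*l))"
  have "(\<Sum>k\<in>{-l..l}. tau l m k * tau l k n)
      = (\<Sum>k\<in>{-l..l}. (complex_of_real (sc l m / sc l n) * CC l * CC l) * (?M (nat (l-m)) (nat (l-k)) * ?M (nat (l-k)) (nat (l-n))))"
  proof (rule sum.cong[OF refl])
    fix k assume k: "k \<in> {-l..l}"
    have sk: "sc l k \<noteq> 0" using sc_pos[of l k] by simp
    define a1 where "a1 = complex_of_real (sc l m / sc l k)"
    define a2 where "a2 = complex_of_real (sc l k / sc l n)"
    define M1 where "M1 = ?M (nat (l-m)) (nat (l-k))"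
    define M2 where "M2 = ?M (nat (l-k)) (nat (l-n))"
    have a12: "a1 * a2 = complex_of_real (sc l m / sc l n)"
    proof -
      have "sc l m / sc l k * (sc l k / sc l n) = sc l m / sc l n" using sk by simp
      then show ?thesis unfolding a1_def a2_def by (metis of_real_mult)
    qed
    have "tau l m k * tau l k n = (a1 * CC l * M1) * (a2 * CC l * M2)"
      using tau_eq[OF l mn(1) k] tau_eq[OF l k mn(2)] unfolding a1_def a2_def M1_def M2_def by simp
    also have "\<dots> = (a1 * a2 * CC l * CC l) * (M1 * M2)" by (simp only: mult_ac)
    finally show "tau l m k * tau l k n = (complex_of_real (sc l m / sc l n) * CC l * CC l) * (?M (nat (l-m)) (nat (l-k)) * ?M (nat (l-k)) (nat (l-n)))"
      unfolding a12 M1_def M2_def .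
  qed
  also have "\<dots> = (complex_of_real (sc l m / sc l n) * CC l * CC l) * (if m = n then 2^nat (2*l) else 0)"
    by (subst sum_distrib_left[symmetric]) (simp only: MM_sq_int[OF l mn])
  also have "\<dots> = (if m = n then 1 else 0)"
    using CC_sq[OF l] sc_pos[of l n] by (auto simp: mult.assoc)
  finally show ?thesis .
qed

lemma term_coeff:
  "coeff (of_nat c * monom (1::complex) 2 ^ k * [:-1:]^(L-k)) L = (if 2*k = L then of_nat c * (-1)^(L-k) else 0)"
proof -
  have "of_nat c * monom (1::complex) 2 ^ k * [:-1:]^(L-k) = monom (of_nat c * (-1)^(L-k)) (2*k)"
    by (simp add: of_nat_poly poly_const_pow monom_power mult.commute smult_monom flip: smult_monom) (simp add: smult_monom)
  then show ?thesis by (simp add: coeff_monom)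
qed

lemma coeff_bound:
  assumes "L \<ge> 1"
  shows "cmod (coeff (([:1,1:] :: complex poly)^L * [:-1,1:]^L) L) \<le> 2^L - 1"
proof -
  have AB: "([:1,1:] :: complex poly) * [:-1,1:] = monom 1 2 + [:-1:]"
    by (simp add: monom_altdef power2_eq_square)
  have "([:1,1:] :: complex poly)^L * [:-1,1:]^L = (monom 1 2 + [:-1:])^L"
    unfolding power_mult_distrib[symmetric] AB ..
  also have "\<dots> = (\<Sum>k\<le>L. of_nat (L choose k) * monom 1 2 ^ k * [:-1:]^(L-k))"
    by (rule binomial_ring)
  finally have "coeff (([:1,1:] :: complex poly)^L * [:-1,1:]^L) L
      = (\<Sum>k\<le>L. (if 2*k = L then of_nat (L choose k) * (-1)^(L-k) else 0))"
    by (simp add: coeff_sum term_coeff)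
  then have "cmod (coeff (([:1,1:] :: complex poly)^L * [:-1,1:]^L) L)
      \<le> (\<Sum>k\<le>L. cmod (if 2*k = L then of_nat (L choose k) * (-1)^(L-k) else 0))"
    by (simp add: norm_sum)
  also have "\<dots> \<le> (\<Sum>k\<le>L. (if k = L then 0 else real (L choose k)))"
  proof (rule sum_mono)
    fix k assume "k \<in> {..L}"
    show "cmod (if 2*k = L then of_nat (L choose k) * (-1)^(L-k) else 0 :: complex) \<le> (if k = L then 0 else real (L choose k))"
      using assms by (auto simp: norm_mult norm_power)
  qed
  also have "\<dots> = (\<Sum>k\<le>L. real (L choose k)) - 1"
  proof -
    have "(\<Sum>k\<le>L. real (L choose k)) = (\<Sum>k\<le>L. (if k = L then 0 else real (L choose k))) + (\<Sum>k\<le>L. (if k = L then real (L choose k) else 0))"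
      by (simp only: sum.distrib[symmetric]) (rule sum.cong, auto)
    moreover have "(\<Sum>k\<le>L. (if k = L then real (L choose k) else 0)) = 1"
      by (simp add: sum.delta)
    ultimately show ?thesis by simp
  qed
  also have "\<dots> = 2^L - 1"
    using choose_row_sum[of L] by (metis of_nat_numeral of_nat_power of_nat_sum)
  finally show ?thesis .
qed

lemma tau00:
  fixes l :: int assumes l: "l \<ge> 1"
  shows "cmod (tau l 0 0) < 1"
proof -
  have z: "(0::int) \<in> {-l..l}" using l by simp
  have N: "nat (2*l) - nat l = nat l" using l by simp
  have "tau l 0 0 = CC l * coeff (([:1,1:] :: complex poly)^nat l * [:-1,1:]^nat l) (nat l)"
    using tau_eq[OF _ z z] l sc_pos[of l 0] by (simp add: MM_def PP_def N)
  moreover have "cmod (CC l) = 1 / 2^nat l"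
    by (simp add: CC_def norm_divide norm_power)
  moreover have "cmod (coeff (([:1,1:] :: complex poly)^nat l * [:-1,1:]^nat l) (nat l)) \<le> 2^nat l - 1"
    using coeff_bound[of "nat l"] l by simp
  ultimately have "cmod (tau l 0 0) \<le> (2^nat l - 1) / 2^nat l"
    by (simp add: norm_mult divide_right_mono)
  also have "\<dots> < 1" by simp
  finally show ?thesis .
qed

lemma pcompose_power: "pcompose (p ^ n) r = (pcompose p r) ^ n"
  by (induction n) (simp_all add: pcompose_1 pcompose_mult)

lemma coprime_AB: "coprime ([:1,1:] :: complex poly) [:-1,1:]"
proof (rule coprimeI)
  fix c :: "complex poly" assume "c dvd [:1,1:]" "c dvd [:-1,1:]"
  then have "c dvd [:1,1:] - [:-1,1:]" by (rule dvd_diff)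
  moreover have "([:1,1:] :: complex poly) - [:-1,1:] = [:2:]" by simp
  ultimately have "c dvd [:2:]" by simp
  moreover have "is_unit ([:2:] :: complex poly)" by (rule is_unit_triv) simp
  ultimately show "is_unit c" by (rule dvd_unit_imp_unit)
qed

lemma reflect_dvd:
  fixes f :: "complex poly"
  assumes refl: "pcompose f [:0,-1:] = f \<or> pcompose f [:0,-1:] = -f"
    and d: "p ^ a dvd f"
  shows "(pcompose p [:0,-1:]) ^ a dvd f"
proof -
  obtain g where g: "f = p^a * g" using d by (auto elim: dvdE)
  have "pcompose f [:0,-1:] = (pcompose p [:0,-1:])^a * pcompose g [:0,-1:]"
    by (simp add: g pcompose_mult pcompose_power)
  then have "(pcompose p [:0,-1:])^a dvd pcompose f [:0,-1:]" by simp
  then show ?thesis using refl by auto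
qed

lemma neg_pow_dvd:
  fixes p :: "complex poly"
  assumes "(- p) ^ k dvd f" shows "p ^ k dvd f"
proof -
  have "p ^ k dvd (- 1) ^ k * p ^ k" by (rule dvd_triv_right)
  then have "p ^ k dvd (- p) ^ k" by (subst power_minus)
  then show ?thesis using assms by (rule dvd_trans)
qed

lemma vanish:
  fixes f :: "complex poly"
  assumes dA: "[:1,1:] ^ a dvd f" and dB: "[:-1,1:] ^ a dvd f" and deg: "degree f < 2 * a"
  shows "f = 0"
proof (rule ccontr)
  assume f0: "f \<noteq> 0"
  have "coprime (([:1,1:] :: complex poly) ^ a) ([:-1,1:] ^ a)"
    using coprime_AB by (simp add: coprime_power_left_iff coprime_power_right_iff)
  then have "[:1,1:] ^ a * [:-1,1:] ^ a dvd f" using dA dB by (intro divides_mult)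
  then have "degree (([:1,1:] :: complex poly) ^ a * [:-1,1:] ^ a) \<le> degree f"
    using f0 by (rule dvd_imp_degree_le)
  moreover have "degree (([:1,1:] :: complex poly) ^ a * [:-1,1:] ^ a) = 2 * a"
  proof -
    have "degree (([:1,1:] :: complex poly) ^ a * [:-1,1:] ^ a) = degree (([:1,1:] :: complex poly) ^ a) + degree (([:-1,1:] :: complex poly) ^ a)"
      by (rule degree_mult_eq) simp_all
    then show ?thesis by (simp add: degree_linear_power)
  qed
  ultimately show False using deg by simp
qed

lemma parity_refl:
  fixes f :: "complex poly"
  assumes "\<And>i. odd i \<Longrightarrow> coeff f i = 0"
  shows "pcompose f [:0,-1:] = f"
proof (rule poly_eqI)
  fix n show "coeff (pcompose f [:0,-1:]) n = coeff f n"
    by (cases "even n") (auto simp: coeff_pcompose_linear assms)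
qed

lemma parity_refl2:
  fixes f :: "complex poly"
  assumes "\<And>i. even i \<Longrightarrow> coeff f i = 0"
  shows "pcompose f [:0,-1:] = -f"
proof (rule poly_eqI)
  fix n show "coeff (pcompose f [:0,-1:]) n = coeff (-f) n"
    by (cases "even n") (auto simp: coeff_pcompose_linear assms)
qed

lemma part_c:
  fixes l :: int and v :: "int \<Rightarrow> complex"
  assumes l: "l \<ge> 1"
    and supp: "(\<forall>n\<in>{-l..l}. n \<notin> {-l..-1} \<longrightarrow> v n = 0) \<or> (\<forall>n\<in>{-l..l}. n \<notin> {1..l} \<longrightarrow> v n = 0)"
    and par: "(\<forall>m\<in>{-l..l}. \<not> even (m + l) \<longrightarrow> tau_apply l v m = 0) \<or>
             (\<forall>m\<in>{-l..l}. \<not> odd (m + l) \<longrightarrow> tau_apply l v m = 0)"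
  shows "\<forall>n\<in>{-l..l}. v n = 0"
proof -
  define N where "N = nat (2*l)"
  define L where "L = nat l"
  have NL: "N = 2 * L" using l by (simp add: N_def L_def)
  have l0: "l \<ge> 0" using l by simp
  define w where "w n = v n / complex_of_real (sc l n)" for n
  define f where "f = (\<Sum>n\<in>{-l..l}. smult (w n) (PP N (nat (l-n))))"
  define c where "c m = (\<Sum>n\<in>{-l..l}. MM N (nat (l-m)) (nat (l-n)) * w n)" for m
  have coeff_f: "coeff f (nat (l-m)) = c m" for m
    by (simp add: f_def c_def coeff_sum MM_def mult.commute)
  have degf: "degree f \<le> N"
    unfolding f_def
  proof (rule degree_sum_le)
    fix n assume "n \<in> {-l..l}"
    then have "nat (l-n) \<le> N" unfolding N_def by (intro nat_mono) simp
    then show "degree (smult (w n) (PP N (nat (l-n)))) \<le> N"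
      using degree_PP degree_smult_le order_trans by blast
  qed simp
  have ta: "tau_apply l v m = complex_of_real (sc l m) * CC l * c m" if m: "m \<in> {-l..l}" for m
  proof -
    have "tau_apply l v m = (\<Sum>n\<in>{-l..l}. complex_of_real (sc l m) * CC l * (MM N (nat (l-m)) (nat (l-n)) * w n))"
      unfolding tau_apply_def
    proof (rule sum.cong[OF refl])
      fix n assume n: "n \<in> {-l..l}"
      have sn: "complex_of_real (sc l n) \<noteq> 0" using sc_pos[of l n] by simp
      show "tau l m n * v n = complex_of_real (sc l m) * CC l * (MM N (nat (l-m)) (nat (l-n)) * w n)"
        using tau_eq[OF l0 m n] sn by (simp add: w_def N_def field_simps)
    qed
    then show ?thesis by (simp add: c_def sum_distrib_left)
  qed
  have cz: "c m = 0 \<longleftrightarrow> tau_apply l v m = 0" if "m \<in> {-l..l}" for m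
  proof -
    have "complex_of_real (sc l m) \<noteq> 0" using sc_pos[of l m] by simp
    moreover have "CC l \<noteq> 0" by (simp add: CC_def)
    ultimately show ?thesis using ta[OF that] by simp
  qed
  have par_i: "even (i::nat) = even (l - int i + l)" for i
    by simp
  have rf: "pcompose f [:0,-1:] = f \<or> pcompose f [:0,-1:] = -f"
  proof (cases "\<forall>m\<in>{-l..l}. \<not> even (m + l) \<longrightarrow> tau_apply l v m = 0")
    case True
    have "coeff f i = 0" if "odd i" for i
    proof (cases "i \<le> N")
      case True
      then have m: "l - int i \<in> {-l..l}" "nat (l - (l - int i)) = i" using l by (auto simp: N_def)
      then show ?thesis using \<open>\<forall>m\<in>{-l..l}. \<not> even (m + l) \<longrightarrow> tau_apply l v m = 0\<close> that cz[OF m(1)] coeff_f[of "l - int i"]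
        by auto
    next
      case False then show ?thesis using degf by (simp add: coeff_eq_0)
    qed
    then show ?thesis using parity_refl by blast
  next
    case False
    then have P: "\<forall>m\<in>{-l..l}. \<not> odd (m + l) \<longrightarrow> tau_apply l v m = 0" using par by blast
    have "coeff f i = 0" if "even i" for i
    proof (cases "i \<le> N")
      case True
      then have m: "l - int i \<in> {-l..l}" "nat (l - (l - int i)) = i" using l by (auto simp: N_def)
      then show ?thesis using P that cz[OF m(1)] coeff_f[of "l - int i"]
        by auto
    next
      case False then show ?thesis using degf by (simp add: coeff_eq_0)
    qed
    then show ?thesis using parity_refl2 by blast
  qed
  have A: "pcompose [:1,1:] [:0,-1:] = - ([:-1,1:] :: complex poly)" by (simp add: pcompose_pCons)
  have B: "pcompose [:-1,1:] [:0,-1:] = - ([:1,1:] :: complex poly)" by (simp add: pcompose_pCons)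
  have dvd_both: "[:1,1:] ^ (L+1) dvd f \<and> [:-1,1:] ^ (L+1) dvd f"
  proof (cases "\<forall>n\<in>{-l..l}. n \<notin> {-l..-1} \<longrightarrow> v n = 0")
    case True
    have dA: "[:1,1:] ^ (L+1) dvd f"
      unfolding f_def
    proof (rule dvd_sum)
      fix n assume n: "n \<in> {-l..l}"
      show "[:1,1:] ^ (L+1) dvd smult (w n) (PP N (nat (l-n)))"
      proof (cases "n \<le> -1")
        case True
        then have "L + 1 \<le> nat (l-n)" unfolding L_def using l by (subst le_nat_iff) auto
        then have "[:1,1:] ^ (L+1) dvd ([:1,1:] :: complex poly) ^ nat (l-n)" by (rule le_imp_power_dvd)
        then show ?thesis unfolding PP_def by (simp add: dvd_smult)
      next
        case False then have "v n = 0" using True n by auto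
        then show ?thesis by (simp add: w_def)
      qed
    qed
    moreover have "[:-1,1:] ^ (L+1) dvd f"
      using reflect_dvd[OF rf dA] unfolding A by (rule neg_pow_dvd)
    ultimately show ?thesis by simp
  next
    case False
    then have S: "\<forall>n\<in>{-l..l}. n \<notin> {1..l} \<longrightarrow> v n = 0" using supp by blast
    have dB: "[:-1,1:] ^ (L+1) dvd f"
      unfolding f_def
    proof (rule dvd_sum)
      fix n assume n: "n \<in> {-l..l}"
      show "[:-1,1:] ^ (L+1) dvd smult (w n) (PP N (nat (l-n)))"
      proof (cases "n \<ge> 1")
        case True
        have e: "N - nat (l-n) = nat (l+n)" using n by (auto simp: N_def)
        have "L + 1 \<le> nat (l+n)" unfolding L_def using l True by (subst le_nat_iff) auto
        then have "L + 1 \<le> N - nat (l-n)" using e by simp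
        then have "[:-1,1:] ^ (L+1) dvd ([:-1,1:] :: complex poly) ^ (N - nat (l-n))" by (rule le_imp_power_dvd)
        then show ?thesis unfolding PP_def by (simp add: dvd_smult)
      next
        case False then have "v n = 0" using S n by auto
        then show ?thesis by (simp add: w_def)
      qed
    qed
    moreover have "[:1,1:] ^ (L+1) dvd f"
      using reflect_dvd[OF rf dB] unfolding B by (rule neg_pow_dvd)
    ultimately show ?thesis by simp
  qed
  have f0: "f = 0"
    by (rule vanish[of "L+1"]) (use dvd_both degf NL in auto)
  have c0: "c m = 0" if "m \<in> {-l..l}" for m
    using coeff_f[of m] f0 by simp
  show ?thesis
  proof
    fix n0 assume n0: "n0 \<in> {-l..l}"
    have "0 = (\<Sum>m\<in>{-l..l}. MM N (nat (l-n0)) (nat (l-m)) * c m)"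
      using c0 by simp
    also have "\<dots> = (\<Sum>n\<in>{-l..l}. (\<Sum>m\<in>{-l..l}. MM N (nat (l-n0)) (nat (l-m)) * MM N (nat (l-m)) (nat (l-n))) * w n)"
      by (simp add: c_def sum_distrib_left sum_distrib_right mult.assoc) (rule sum.swap)
    also have "\<dots> = (\<Sum>n\<in>{-l..l}. (if n0 = n then 2^N else 0) * w n)"
      by (rule sum.cong[OF refl]) (simp add: N_def MM_sq_int[OF l0 n0])
    also have "\<dots> = (\<Sum>n\<in>{-l..l}. if n = n0 then 2^N * w n else 0)"
      by (rule sum.cong) auto
    also have "\<dots> = 2^N * w n0" using n0 by simp
    finally have "w n0 = 0" by simp
    then show "v n0 = 0" using sc_pos[of l n0] by (simp add: w_def)
  qed
qed

theorem mainTheorem9: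
  fixes l :: int
  assumes "l \<ge> 1"
  shows "(\<exists>sigma :: int \<Rightarrow> int \<Rightarrow> complex.
            (\<forall>m\<in>{-l..l}. \<forall>n\<in>{-l..l}.
               (\<Sum>k\<in>{-l..l}. tau l m k * sigma k n) = (if m = n then 1 else 0)) \<and>
            (\<forall>m\<in>{-l..l}. \<forall>n\<in>{-l..l}.
               (\<Sum>k\<in>{-l..l}. sigma m k * tau l k n) = (if m = n then 1 else 0)))
       \<and> cmod (tau l 0 0) < 1
       \<and> (\<forall>v :: int \<Rightarrow> complex.
            ((\<forall>n\<in>{-l..l}. n \<notin> {-l..-1} \<longrightarrow> v n = 0) \<or>
             (\<forall>n\<in>{-l..l}. n \<notin> {1..l} \<longrightarrow> v n = 0)) \<and>
            ((\<forall>m\<in>{-l..l}. \<not> even (m + l) \<longrightarrow> tau_apply l v m = 0) \<or>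
             (\<forall>m\<in>{-l..l}. \<not> odd (m + l) \<longrightarrow> tau_apply l v m = 0))
            \<longrightarrow> (\<forall>n\<in>{-l..l}. v n = 0))"
proof -
  have l0: "l \<ge> 0" using assms by simp
  have a: "\<exists>sigma :: int \<Rightarrow> int \<Rightarrow> complex.
            (\<forall>m\<in>{-l..l}. \<forall>n\<in>{-l..l}.
               (\<Sum>k\<in>{-l..l}. tau l m k * sigma k n) = (if m = n then 1 else 0)) \<and>
            (\<forall>m\<in>{-l..l}. \<forall>n\<in>{-l..l}.
               (\<Sum>k\<in>{-l..l}. sigma m k * tau l k n) = (if m = n then 1 else 0))"
    by (rule exI[of _ "tau l"]) (simp add: tau_sq[OF l0])
  show ?thesis
    using a tau00[OF assms] part_c[OF assms] by blast
qed

end
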